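(* Let $m,n\in\mathbb{N}$ be coprime with $1\le m\le n-1$, and let $\Gamma$ be a $\mathbb{D}_n$-symmetric billiard curve with equivariant parametrization $\gamma$. Let $Z\in\Gamma^{\mathbb{Z}}$ be an $n$-periodic billiard sequence of rotation number $\frac mn$ with lift $X\in\Sigma$, and suppose every rotation in $\mathbb{Z}_n=\langle R\rangle$ is a spatiotemporal symmetry of $Z$. Then: - $Z$ is Birkhoff, $Z_i=R^{mi}(Z_0)$, and $X_i=X_0+\frac mni$ for all $i$; - the segment length $\|Z_{i+1}-Z_i\|$ and the curvature $\kappa(Z_i)$ are independent of $i$; - if moreover $Z$ is a billiard orbit, then $\theta_i:=\tfrac12\angle(Z_{i+1}-Z_i,\,Z_i-Z_{i-1})=\frac{m\pi}{n}$ for all $i$.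
   Context: $\mathbb{D}_n=\langle R,S\rangle$, where $R$ is counterclockwise rotation by $2\pi/n$ and $S$ is the horizontal reflection. $\Gamma$ is a $C^2$ simple closed $\mathbb{D}_n$-invariant curve bounding a strictly convex domain, parametrized counterclockwise by a $1$-periodic $C^2$ immersion $\gamma$ descending to an embedding of $\mathbb{R}/\mathbb{Z}$, with $\gamma(x+1/n)=R\gamma(x)$ and $\gamma(-x)=S\gamma(x)$. A billiard sequence has $Z_i\ne Z_{i+1}$, with lift $X\in\Sigma=\{0<X_{i+1}-X_i<1\}$, $\gamma(X_i)=Z_i$. The rotation number is $\lim X_i/i$. $h$ is a spatiotemporal symmetry of $Z$ if there is $k$ with $h(Z_i)=Z_{k+i}$ for all $i$ or $h(Z_i)=Z_{k-i}$ for all $i$. Birkhoff means the lift satisfies $X_i\le X_j+l\Rightarrow X_{i+m}\le X_{j+m}+l$ for all integers. A billiard orbit is a billiard sequence satisfying the reflection law at each point. $\kappa$ is the curvature of $\Gamma$. *)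

theory Defs
  imports "HOL-Complex_Analysis.Complex_Analysis"
begin

text \<open>The plane is modelled by the complex numbers. R = rotation by 2pi/n,
  S = horizontal reflection = complex conjugation.\<close>

definition Rpow :: "nat \<Rightarrow> int \<Rightarrow> complex \<Rightarrow> complex" where
  "Rpow n k z = cis (2 * pi * real_of_int k / real n) * z"

abbreviation rotR :: "nat \<Rightarrow> complex \<Rightarrow> complex" where
  "rotR n \<equiv> Rpow n 1"

abbreviation reflS :: "complex \<Rightarrow> complex" where
  "reflS \<equiv> cnj"

definition tangent :: "(real \<Rightarrow> complex) \<Rightarrow> real \<Rightarrow> complex" where
  "tangent \<gamma> x = vector_derivative \<gamma> (at x)"

definition accel :: "(real \<Rightarrow> complex) \<Rightarrow> real \<Rightarrow> complex" where
  "accel \<gamma> x = vector_derivative (tangent \<gamma>) (at x)"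

definition curvature :: "(real \<Rightarrow> complex) \<Rightarrow> real \<Rightarrow> real" where
  "curvature \<gamma> x = Im (cnj (tangent \<gamma> x) * accel \<gamma> x) / (cmod (tangent \<gamma> x)) ^ 3"

definition C2_curve :: "(real \<Rightarrow> complex) \<Rightarrow> bool" where
  "C2_curve \<gamma> \<longleftrightarrow> (\<forall>x. \<gamma> differentiable at x) \<and> (\<forall>x. tangent \<gamma> differentiable at x)
     \<and> continuous_on UNIV (accel \<gamma>)"

definition Dn_billiard_curve :: "nat \<Rightarrow> (real \<Rightarrow> complex) \<Rightarrow> bool" where
  "Dn_billiard_curve n \<gamma> \<longleftrightarrow>
     C2_curve \<gamma>
   \<and> (\<forall>x. tangent \<gamma> x \<noteq> 0)
   \<and> (\<forall>x. \<gamma> (x + 1) = \<gamma> x)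
   \<and> (\<forall>x y. \<gamma> x = \<gamma> y \<longrightarrow> x - y \<in> \<int>)
   \<and> (\<exists>D. convex D \<and> compact D \<and> frontier D = range \<gamma>
        \<and> (\<forall>a\<in>D. \<forall>b\<in>D. a \<noteq> b \<longrightarrow> open_segment a b \<subseteq> interior D)
        \<and> (\<forall>z\<in>interior D. winding_number \<gamma> z = 1))
   \<and> (\<forall>x. \<gamma> (x + 1 / real n) = rotR n (\<gamma> x))
   \<and> (\<forall>x. \<gamma> (- x) = reflS (\<gamma> x))"

definition billiard_sequence :: "(real \<Rightarrow> complex) \<Rightarrow> (int \<Rightarrow> complex) \<Rightarrow> bool" where
  "billiard_sequence \<gamma> Z \<longleftrightarrow> (\<forall>i. Z i \<in> range \<gamma> \<and> Z i \<noteq> Z (i + 1))"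

definition is_lift :: "(real \<Rightarrow> complex) \<Rightarrow> (int \<Rightarrow> complex) \<Rightarrow> (int \<Rightarrow> real) \<Rightarrow> bool" where
  "is_lift \<gamma> Z X \<longleftrightarrow> (\<forall>i. 0 < X (i + 1) - X i \<and> X (i + 1) - X i < 1 \<and> \<gamma> (X i) = Z i)"

definition has_rotation_number :: "(int \<Rightarrow> real) \<Rightarrow> real \<Rightarrow> bool" where
  "has_rotation_number X \<rho> \<longleftrightarrow> ((\<lambda>i::int. X i / real_of_int i) \<longlongrightarrow> \<rho>) at_top"

definition spatiotemporal_symmetry :: "(complex \<Rightarrow> complex) \<Rightarrow> (int \<Rightarrow> complex) \<Rightarrow> bool" where
  "spatiotemporal_symmetry h Z \<longleftrightarrow>
     (\<exists>k::int. (\<forall>i. h (Z i) = Z (k + i)) \<or> (\<forall>i. h (Z i) = Z (k - i)))"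

definition Birkhoff :: "(int \<Rightarrow> real) \<Rightarrow> bool" where
  "Birkhoff X \<longleftrightarrow> (\<forall>i j l s::int. X i \<le> X j + l \<longrightarrow> X (i + s) \<le> X (j + s) + l)"

text \<open>Reflection law at Z_i: the outgoing unit direction minus the incoming unit
  direction is normal to the tangent of Gamma at Z_i = gamma(X_i).\<close>
definition billiard_orbit :: "(real \<Rightarrow> complex) \<Rightarrow> (int \<Rightarrow> complex) \<Rightarrow> (int \<Rightarrow> real) \<Rightarrow> bool" where
  "billiard_orbit \<gamma> Z X \<longleftrightarrow> billiard_sequence \<gamma> Z \<and> is_lift \<gamma> Z X \<and>
     (\<forall>i. ((Z (i + 1) - Z i) / cmod (Z (i + 1) - Z i) - (Z i - Z (i - 1)) / cmod (Z i - Z (i - 1)))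
            \<bullet> tangent \<gamma> (X i) = 0)"

text \<open>Oriented angle from v to u (counterclockwise), taking values in [0, 2pi).\<close>
definition oangle :: "complex \<Rightarrow> complex \<Rightarrow> real" where
  "oangle u v = (if 0 \<le> Arg (u / v) then Arg (u / v) else Arg (u / v) + 2 * pi)"

end

theory Submission imports Defs begin

lemma deriv_shift:
  fixes f :: "real \<Rightarrow> complex"
  assumes d: "\<forall>y. f differentiable at y" and e: "\<forall>y. f (y + a) = c * f y"
  shows "vector_derivative f (at (y + a)) = c * vector_derivative f (at y)"
proof -
  have h1: "(f has_vector_derivative vector_derivative f (at (y+a))) (at (y+a))"
    using d vector_derivative_works by blast
  have s: "((\<lambda>t. t + a) has_vector_derivative 1) (at y)"
    by (auto intro!: derivative_eq_intros)
  have "((f \<circ> (\<lambda>t. t + a)) has_vector_derivative (1 *\<^sub>R vector_derivative f (at (y+a)))) (at y)"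
    using vector_diff_chain_at[OF s] h1 by simp
  then have h2: "((\<lambda>t. c * f t) has_vector_derivative vector_derivative f (at (y+a))) (at y)"
    using e by (simp add: o_def)
  have h3: "(f has_vector_derivative vector_derivative f (at y)) (at y)"
    using d vector_derivative_works by blast
  have h4: "((\<lambda>t. c * f t) has_vector_derivative c * vector_derivative f (at y)) (at y)"
    by (rule has_vector_derivative_mult_right[OF h3])
  show ?thesis using vector_derivative_unique_at[OF h2 h4] .
qed

lemma curv_shift:
  assumes C: "C2_curve \<gamma>" and e: "\<forall>y. \<gamma> (y + a) = c * \<gamma> y" and c: "cmod c = 1"
  shows "curvature \<gamma> (x + a) = curvature \<gamma> x"
proof -
  have t: "\<forall>y. tangent \<gamma> (y + a) = c * tangent \<gamma> y"
    using deriv_shift[of \<gamma> a c] C e unfolding C2_curve_def tangent_def by blast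
  have ac: "accel \<gamma> (x + a) = c * accel \<gamma> x"
    using deriv_shift[of "tangent \<gamma>" a c] C t unfolding C2_curve_def accel_def by blast
  have cc: "cnj c * c = 1"
  proof -
    have "c * cnj c = complex_of_real ((cmod c)^2)" by (rule complex_norm_square[symmetric])
    then show ?thesis using c by (simp add: mult.commute)
  qed
  have "Im (cnj (tangent \<gamma> (x+a)) * accel \<gamma> (x+a)) = Im (cnj (tangent \<gamma> x) * accel \<gamma> x)"
  proof -
    have "cnj (tangent \<gamma> (x+a)) * accel \<gamma> (x+a) = (cnj c * c) * (cnj (tangent \<gamma> x) * accel \<gamma> x)"
      using t ac by (simp add: mult_ac)
    then show ?thesis using cc by simp
  qed
  moreover have "cmod (tangent \<gamma> (x+a)) = cmod (tangent \<gamma> x)"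
    using t c by (simp add: norm_mult)
  ultimately show ?thesis unfolding curvature_def by simp
qed

lemma gamma_Rpow_nat:
  assumes "\<forall>x. \<gamma> (x + 1 / real n) = rotR n (\<gamma> x)"
  shows "\<gamma> (x + real k / real n) = Rpow n (int k) (\<gamma> x)"
proof (induction k)
  case 0 then show ?case by (simp add: Rpow_def)
next
  case (Suc k)
  have "\<gamma> (x + real (Suc k) / real n) = \<gamma> ((x + real k / real n) + 1 / real n)"
    by (simp add: add_divide_distrib algebra_simps)
  also have "\<dots> = rotR n (\<gamma> (x + real k / real n))" using assms by blast
  also have "\<dots> = Rpow n (int (Suc k)) (\<gamma> x)"
    using Suc by (simp add: Rpow_def mult.assoc cis_mult add_divide_distrib algebra_simps)
  finally show ?case .
qed

lemma gamma_Rpow: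
  assumes "\<forall>x. \<gamma> (x + 1 / real n) = rotR n (\<gamma> x)"
  shows "\<gamma> (x + real_of_int k / real n) = Rpow n k (\<gamma> x)"
proof (cases "k \<ge> 0")
  case True
  then obtain j where "k = int j" by (metis nonneg_eq_int)
  then show ?thesis using gamma_Rpow_nat[OF assms] by simp
next
  case False
  obtain j where j: "k = - int j" using False by (intro that[of "nat (-k)"]) simp
  have "\<gamma> x = \<gamma> ((x + real_of_int k / real n) + real j / real n)" using j by simp
  also have "\<dots> = Rpow n (int j) (\<gamma> (x + real_of_int k / real n))"
    using gamma_Rpow_nat[OF assms] by blast
  finally have gx: "\<gamma> x = cis (2 * pi * real j / real n) * \<gamma> (x + real_of_int k / real n)"
    by (simp add: Rpow_def)
  then have "\<gamma> (x + real_of_int k / real n) = cis (- (2 * pi * real j / real n)) * \<gamma> x"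
  proof -
    have "cis (- (2 * pi * real j / real n)) * \<gamma> x = (cis (- (2 * pi * real j / real n)) * cis (2 * pi * real j / real n)) * \<gamma> (x + real_of_int k / real n)"
      using gx by (simp add: mult.assoc)
    also have "\<dots> = \<gamma> (x + real_of_int k / real n)" by (simp add: cis_mult)
    finally show ?thesis by simp
  qed
  then show ?thesis using j by (simp add: Rpow_def)
qed


lemma int_const:
  fixes f :: "int \<Rightarrow> 'a"
  assumes "\<forall>i. f (i+1) = f i"
  shows "f i = f 0"
proof (induction i rule: int_induct[where k=0])
  case base then show ?case by simp
next
  case (step1 i) then show ?case using assms by simp
next
  case (step2 i) then show ?case using assms by (metis diff_add_cancel)
qed

lemma shift_mult:
  fixes g :: "int \<Rightarrow> real"
  assumes "\<forall>i. g (i + p) = g i + c"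
  shows "g (i + p * t) = g i + of_int t * c"
proof (induction t rule: int_induct[where k=0])
  case base then show ?case by simp
next
  case (step1 t)
  have "g (i + p * (t+1)) = g ((i + p * t) + p)" by (simp add: algebra_simps)
  also have "\<dots> = g (i + p*t) + c" using assms by blast
  finally show ?case using step1 by (simp add: algebra_simps)
next
  case (step2 t)
  have "g (i + p * t) = g ((i + p * (t - 1)) + p)" by (simp add: algebra_simps)
  also have "\<dots> = g (i + p*(t-1)) + c" using assms by blast
  finally show ?case using step2 by (simp add: algebra_simps)
qed

lemma int_small:
  fixes x :: real
  assumes "x \<in> \<int>" "\<bar>x\<bar> < 1"
  shows "x = 0"
proof -
  obtain k where k: "x = of_int k" using assms(1) Ints_cases by blast
  then have "\<bar>k\<bar> < 1" using assms(2) by linarith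
  then have "k = 0" by linarith
  then show ?thesis using k by simp
qed

lemma int_one:
  fixes x :: real
  assumes "x \<in> \<int>" "0 < x" "x < 2"
  shows "x = 1"
proof -
  obtain k where k: "x = of_int k" using assms(1) Ints_cases by blast
  then have "0 < k" "k < 2" using assms by auto
  then have "k = 1" by linarith
  then show ?thesis using k by simp
qed


lemma lift_linear:
  fixes m n :: nat and \<gamma> :: "real \<Rightarrow> complex"
    and Z :: "int \<Rightarrow> complex" and X :: "int \<Rightarrow> real"
  assumes cop: "coprime m n" and m1: "1 \<le> m" and mn: "m \<le> n - 1"
    and inj: "\<forall>x y. \<gamma> x = \<gamma> y \<longrightarrow> x - y \<in> \<int>"
    and rot: "\<forall>x. \<gamma> (x + 1 / real n) = rotR n (\<gamma> x)"
    and per: "\<forall>i. Z (i + int n) = Z i"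
    and lift: "is_lift \<gamma> Z X"
    and rn: "has_rotation_number X (real m / real n)"
    and sym: "spatiotemporal_symmetry (Rpow n 1) Z"
  shows "\<forall>i. X (i + 1) - X i = real m / real n"
proof -
  have n2: "n \<ge> 2" using m1 mn by linarith
  then have nR: "real n > 0" by simp
  define d where "d i = X (i+1) - X i" for i
  have dpos: "0 < d i" "d i < 1" for i using lift unfolding is_lift_def d_def by auto
  have gX: "\<gamma> (X i) = Z i" for i using lift unfolding is_lift_def by auto
  have hz: "X (i + int n) - X i \<in> \<int>" for i
    using inj gX per by metis
  have dper: "d (i + int n) = d i" for i
  proof -
    have "d (i + int n) - d i = (X (i + 1 + int n) - X (i+1)) - (X (i + int n) - X i)"
      unfolding d_def by (simp add: algebra_simps)
    also have "\<dots> \<in> \<int>" using Ints_diff[OF hz[of "i+1"] hz[of i]] .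
    finally have "d (i + int n) - d i \<in> \<int>" .
    moreover have "\<bar>d (i + int n) - d i\<bar> < 1" using dpos[of i] dpos[of "i + int n"] by linarith
    ultimately show ?thesis using int_small by fastforce
  qed
  define P where "P = X (int n) - X 0"
  have Xper: "X (i + int n) = X i + P" for i
  proof -
    have "\<forall>i. (\<lambda>i. X (i + int n) - X i) (i+1) = (\<lambda>i. X (i + int n) - X i) i"
    proof
      fix i
      have "X (i + 1 + int n) - X (i+1) - (X (i + int n) - X i) = d (i + int n) - d i"
        unfolding d_def by (simp add: algebra_simps)
      then show "(\<lambda>i. X (i + int n) - X i) (i+1) = (\<lambda>i. X (i + int n) - X i) i"
        using dper[of i] by simp
    qed
    from int_const[OF this, of i] show ?thesis unfolding P_def by simp
  qed
  have Xmul: "X (i + int n * t) = X i + of_int t * P" for i t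
    using shift_mult[of X "int n" P] Xper by blast
  have PZ: "P \<in> \<int>" using hz[of 0] unfolding P_def by simp
  have Pm: "P = real m"
  proof -
    have f1: "filterlim (\<lambda>j::int. int n * j) at_top at_top"
      unfolding filterlim_at_top
    proof
      fix Z0 :: int
      show "eventually (\<lambda>j. Z0 \<le> int n * j) at_top"
        unfolding eventually_at_top_linorder
      proof (intro exI[of _ "max Z0 0"] allI impI)
        fix j assume "max Z0 0 \<le> j"
        then have "j \<le> int n * j" "Z0 \<le> j" using n2 by (auto intro: mult_right_mono[of 1 "int n" j, simplified])
        then show "Z0 \<le> int n * j" by linarith
      qed
    qed
    have lim1: "((\<lambda>j. X (int n * j) / real_of_int (int n * j)) \<longlongrightarrow> real m / real n) at_top"
      using filterlim_compose[OF rn[unfolded has_rotation_number_def] f1] by (simp add: o_def)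
    have f2: "filterlim (\<lambda>j::int. real_of_int (int n * j)) at_infinity at_top"
      by (rule filterlim_at_top_imp_at_infinity, rule filterlim_compose[OF filterlim_real_of_int_at_top f1])
    have lim0: "((\<lambda>j. X 0 / real_of_int (int n * j)) \<longlongrightarrow> 0) at_top"
      by (rule tendsto_divide_0[OF tendsto_const f2])
    have lim2: "((\<lambda>j. X 0 / real_of_int (int n * j) + P / real n) \<longlongrightarrow> 0 + P / real n) at_top"
      by (intro tendsto_add lim0 tendsto_const)
    have ev: "eventually (\<lambda>j. X 0 / real_of_int (int n * j) + P / real n = X (int n * j) / real_of_int (int n * j)) at_top"
      unfolding eventually_at_top_linorder
    proof (intro exI[of _ 1] allI impI)
      fix j :: int assume j: "1 \<le> j"
      have "X (int n * j) = X 0 + of_int j * P" using Xmul[of 0 j] by simp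
      then show "X 0 / real_of_int (int n * j) + P / real n = X (int n * j) / real_of_int (int n * j)"
        using j nR by (simp add: field_simps)
    qed
    have lim3: "((\<lambda>j. X (int n * j) / real_of_int (int n * j)) \<longlongrightarrow> P / real n) at_top"
      using tendsto_cong[OF ev] lim2 by simp
    have "real m / real n = P / real n" using tendsto_unique[OF _ lim1 lim3] by simp
    then show ?thesis using nR by (simp add: field_simps)
  qed
  have nd: "real n \<noteq> 0" using nR by simp
  have gshift: "\<gamma> (X i + 1 / real n) = Rpow n 1 (Z i)" for i using rot gX by simp
  have dconst: "d i = real m / real n" for i
  proof -
    from sym obtain s where "(\<forall>i. Rpow n 1 (Z i) = Z (s + i)) \<or> (\<forall>i. Rpow n 1 (Z i) = Z (s - i))"
      unfolding spatiotemporal_symmetry_def by blast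
    then show ?thesis
    proof
      assume fw: "\<forall>i. Rpow n 1 (Z i) = Z (s + i)"
      have hq: "X (i + s) - X i - 1 / real n \<in> \<int>" for i
      proof -
        have "\<gamma> (X (i + s)) = \<gamma> (X i + 1 / real n)" using fw gshift gX by (simp add: add.commute)
        then have "X (i + s) - (X i + 1 / real n) \<in> \<int>" using inj by blast
        then show ?thesis by (simp add: algebra_simps)
      qed
      have ds: "d (i + s) = d i" for i
      proof -
        have "d (i + s) - d i = (X (i + 1 + s) - X (i+1) - 1 / real n) - (X (i + s) - X i - 1 / real n)"
          unfolding d_def by (simp add: algebra_simps)
        also have "\<dots> \<in> \<int>" using Ints_diff[OF hq[of "i+1"] hq[of i]] .
        finally have "d (i + s) - d i \<in> \<int>" .
        moreover have "\<bar>d (i + s) - d i\<bar> < 1" using dpos[of i] dpos[of "i + s"] by linarith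
        ultimately show ?thesis using int_small by fastforce
      qed
      define c where "c = X s - X 0"
      have Xs: "X (i + s) = X i + c" for i
      proof -
        have "\<forall>i. (\<lambda>i. X (i + s) - X i) (i+1) = (\<lambda>i. X (i + s) - X i) i"
        proof
          fix i
          have "X (i + 1 + s) - X (i+1) - (X (i + s) - X i) = d (i + s) - d i"
            unfolding d_def by (simp add: algebra_simps)
          then show "(\<lambda>i. X (i + s) - X i) (i+1) = (\<lambda>i. X (i + s) - X i) i"
            using ds[of i] by simp
        qed
        from int_const[OF this, of i] show ?thesis unfolding c_def by simp
      qed
      have "X (0 + s * int n) = X 0 + of_int (int n) * c" by (rule shift_mult) (use Xs in blast)
      then have "X (0 + s * int n) = X 0 + real n * c" by simp
      moreover have "X (0 + int n * s) = X 0 + of_int s * real m" using Xmul[of 0 s] Pm by simp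
      ultimately have nc: "real n * c = of_int s * real m" by (simp add: mult.commute)
      have "c - 1 / real n \<in> \<int>" using hq[of 0] unfolding c_def by simp
      then obtain t where t: "c - 1 / real n = of_int t" using Ints_cases by blast
      have "real n * (c - 1 / real n) = real n * of_int t" using t by simp
      then have "of_int s * real m - 1 = real n * of_int t" using nc nd by (simp add: right_diff_distrib)
      then have "real_of_int (s * int m - 1) = real_of_int (int n * t)" by simp
      then have st: "s * int m = 1 + int n * t" by linarith
      have dsm: "d (i + s * t') = d i" for i t'
        using shift_mult[of d s 0] ds by simp
      have dnm: "d (i + int n * t') = d i" for i t'
        using shift_mult[of d "int n" 0] dper by simp
      have "d (i + 1) = d i" for i
      proof -
        have "d (i + 1) = d ((i + s * int m) + int n * (- t))" using st by (simp add: algebra_simps)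
        also have "\<dots> = d (i + s * int m)" using dnm by blast
        also have "\<dots> = d i" using dsm by blast
        finally show ?thesis .
      qed
      then have dc: "d i = d 0" for i using int_const by blast
      have "X (0 + 1 * int n) = X 0 + of_int (int n) * d 0"
        by (rule shift_mult) (use dc in \<open>auto simp: d_def algebra_simps\<close>)
      then have "real n * d 0 = real m" using Xper[of 0] Pm by simp
      then show ?thesis using dc[of i] nd by (simp add: field_simps)
    next
      assume bw: "\<forall>i. Rpow n 1 (Z i) = Z (s - i)"
      define e where "e i = X (s - i) - X i - 1 / real n" for i
      have eZ: "e i \<in> \<int>" for i
      proof -
        have "\<gamma> (X (s - i)) = \<gamma> (X i + 1 / real n)" using bw gshift gX by simp
        then have "X (s - i) - (X i + 1 / real n) \<in> \<int>" using inj by blast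
        then show ?thesis unfolding e_def by (simp add: algebra_simps)
      qed
      have estep: "e (i + 1) = e i + (-1)" for i
      proof -
        have eq: "e (i+1) - e i = - (d (s - i - 1) + d i)"
          unfolding e_def d_def by (simp add: algebra_simps)
        have "e (i+1) - e i \<in> \<int>" using Ints_diff[OF eZ eZ] .
        then have "d (s - i - 1) + d i \<in> \<int>" using eq by (metis Ints_minus minus_minus)
        moreover have "0 < d (s - i - 1) + d i" "d (s - i - 1) + d i < 2"
          using dpos[of i] dpos[of "s - i - 1"] by linarith+
        ultimately have "d (s - i - 1) + d i = 1" using int_one by blast
        then show ?thesis using eq by simp
      qed
      have elin: "e (0 + 1 * t) = e 0 + of_int t * (-1)" for t
        using shift_mult[of e 1 "-1"] estep by blast
      have "e (int n) = e 0 - real n" using elin[of "int n"] by simp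
      moreover have "X (s - int n) = X s - P" using Xper[of "s - int n"] by simp
      moreover have "X (int n) = X 0 + P" using Xper[of 0] by simp
      ultimately have "real n = 2 * P" unfolding e_def by simp
      then have n2m: "n = 2 * m" using Pm by linarith
      then have "coprime m (2 * m)" using cop by simp
      then have "m = 1" by simp
      then have nn: "n = 2" using n2m by simp
      have P1: "P = 1" using Pm \<open>m = 1\<close> by simp
      have dsum: "d i + d (i + 1) = 1" for i
        using Xper[of i] nn P1 unfolding d_def by (simp add: algebra_simps)
      obtain u where u: "d u = 1 / 2"
      proof (cases "s mod 2 = 0")
        case True
        then obtain u where su: "s = 2 * u" by auto
        have "e u = - 1 / 2" using su nn unfolding e_def by (simp add: algebra_simps)
        then have "(-1/2::real) \<in> \<int>" using eZ[of u] by simp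
        then have False using int_small[of "-1/2"] by simp
        then show ?thesis by simp
      next
        case False
        then have "s mod 2 = 1" by simp
        then obtain u where su: "s = 2 * u + 1" by (metis mult_div_mod_eq add.commute)
        have "e u = d u - 1 / 2" using su nn unfolding e_def d_def by (simp add: algebra_simps)
        then have "d u - 1/2 \<in> \<int>" using eZ[of u] by simp
        moreover have "\<bar>d u - 1/2\<bar> < 1" using dpos[of u] by linarith
        ultimately have "d u = 1/2" using int_small by fastforce
        then show ?thesis using that by blast
      qed
      have "d i = 1 / 2"
      proof (induction i rule: int_induct[where k=u])
        case base then show ?case using u by simp
      next
        case (step1 i) then show ?case using dsum[of i] by simp
      next
        case (step2 i) then show ?case using dsum[of "i - 1"] by simp
      qed
      then show ?thesis using nn \<open>m = 1\<close> by simp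
    qed
  qed
  then show ?thesis unfolding d_def by blast
qed


theorem mainTheorem14:
  fixes m n :: nat and \<gamma> :: "real \<Rightarrow> complex"
    and Z :: "int \<Rightarrow> complex" and X :: "int \<Rightarrow> real"
  assumes "coprime m n" and "1 \<le> m" and "m \<le> n - 1"
    and "Dn_billiard_curve n \<gamma>"
    and "billiard_sequence \<gamma> Z"
    and "\<forall>i. Z (i + int n) = Z i"
    and "is_lift \<gamma> Z X"
    and "has_rotation_number X (real m / real n)"
    and "\<forall>k::int. spatiotemporal_symmetry (Rpow n k) Z"
  shows "Birkhoff X
    \<and> (\<forall>i. Z i = Rpow n (int m * i) (Z 0))
    \<and> (\<forall>i. X i = X 0 + real m / real n * real_of_int i)
    \<and> (\<forall>i. cmod (Z (i + 1) - Z i) = cmod (Z 1 - Z 0))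
    \<and> (\<forall>i. curvature \<gamma> (X i) = curvature \<gamma> (X 0))
    \<and> (billiard_orbit \<gamma> Z X \<longrightarrow>
         (\<forall>i. oangle (Z (i + 1) - Z i) (Z i - Z (i - 1)) / 2 = real m * pi / real n))"
proof -
  note D = assms(4)[unfolded Dn_billiard_curve_def]
  have C2: "C2_curve \<gamma>" using D by blast
  have inj: "\<forall>x y. \<gamma> x = \<gamma> y \<longrightarrow> x - y \<in> \<int>" using D by blast
  have rot: "\<forall>x. \<gamma> (x + 1 / real n) = rotR n (\<gamma> x)" using D by blast
  have n2: "n \<ge> 2" using assms(2,3) by linarith
  then have nR: "real n > 0" by simp
  have gX: "\<gamma> (X i) = Z i" for i using assms(7) unfolding is_lift_def by auto
  have dl: "\<forall>i. X (i + 1) - X i = real m / real n"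
    by (rule lift_linear[OF assms(1,2,3) inj rot assms(6,7,8)]) (use assms(9) in blast)
  have Xlin: "X i = X 0 + real m / real n * real_of_int i" for i
  proof -
    have "X (0 + 1 * i) = X 0 + of_int i * (real m / real n)"
      by (rule shift_mult) (use dl in \<open>auto simp: algebra_simps\<close>)
    then show ?thesis by (simp add: mult.commute)
  qed
  have Xlin': "X i = X 0 + real_of_int (int m * i) / real n" for i
    using Xlin[of i] by simp
  have Zf: "Z i = Rpow n (int m * i) (Z 0)" for i
  proof -
    have "Z i = \<gamma> (X i)" using gX by simp
    also have "\<dots> = \<gamma> (X 0 + real_of_int (int m * i) / real n)" using Xlin'[of i] by simp
    also have "\<dots> = Rpow n (int m * i) (\<gamma> (X 0))" by (rule gamma_Rpow[OF rot])
    finally show ?thesis using gX by simp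
  qed
  define th where "th = 2 * pi * real m / real n"
  have Zc: "Z i = cis (th * of_int i) * Z 0" for i
    using Zf[of i] unfolding Rpow_def th_def by (simp add: mult.commute mult.left_commute)
  define V where "V = (cis th - 1) * Z 0"
  have Zd: "Z (i + 1) - Z i = cis (th * of_int i) * V" for i
  proof -
    have "cis (th * of_int (i+1)) = cis (th * of_int i) * cis th"
      by (simp add: cis_mult distrib_left)
    then show ?thesis using Zc[of i] Zc[of "i+1"] unfolding V_def by (simp add: algebra_simps)
  qed
  have Xsh: "X (i + s) = X i + real m / real n * real_of_int s" for i s
    using Xlin[of i] Xlin[of "i+s"] by (simp add: distrib_left)
  have Birk: "Birkhoff X"
  proof -
    have "X i \<le> X j + l \<longrightarrow> X (i + s) \<le> X (j + s) + l" for i j s :: int and l :: real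
      using Xsh[of i s] Xsh[of j s] by linarith
    then show ?thesis unfolding Birkhoff_def by blast
  qed
  have len: "cmod (Z (i + 1) - Z i) = cmod (Z 1 - Z 0)" for i
    using Zd[of i] Zd[of 0] by (simp add: norm_mult)
  have curv: "curvature \<gamma> (X i) = curvature \<gamma> (X 0)" for i
  proof -
    have e: "\<forall>y. \<gamma> (y + real_of_int (int m * i) / real n) = cis (2 * pi * real_of_int (int m * i) / real n) * \<gamma> y"
      using gamma_Rpow[OF rot] unfolding Rpow_def by blast
    show ?thesis using curv_shift[OF C2 e, of "X 0"] Xlin'[of i] by simp
  qed
  have ang: "oangle (Z (i + 1) - Z i) (Z i - Z (i - 1)) / 2 = real m * pi / real n" for i
  proof -
    have V0: "V \<noteq> 0"
    proof
      assume "V = 0"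
      then have "Z 1 = Z 0" using Zd[of 0] by simp
      then show False using assms(5) unfolding billiard_sequence_def by (metis add_0)
    qed
    have "Z i - Z (i - 1) = cis (th * of_int (i - 1)) * V" using Zd[of "i-1"] by simp
    then have "(Z (i + 1) - Z i) / (Z i - Z (i - 1)) = cis (th * of_int i) / cis (th * of_int (i - 1))"
      using Zd[of i] V0 by simp
    also have "\<dots> = cis th" by (simp add: cis_divide algebra_simps)
    finally have q: "(Z (i + 1) - Z i) / (Z i - Z (i - 1)) = cis th" .
    have th0: "0 < th" unfolding th_def using assms(2) nR by simp
    have th1: "th < 2 * pi" unfolding th_def using assms(3) n2 nR by (simp add: field_simps)
    have "oangle (Z (i + 1) - Z i) (Z i - Z (i - 1)) = th"
    proof (cases "th \<le> pi")
      case True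
      then have "Arg (cis th) = th" using th0 by (intro Arg_cis) auto
      then show ?thesis unfolding oangle_def q using th0 by simp
    next
      case False
      have "cis th = cis (th - 2 * pi)" by (simp add: cis_divide[symmetric])
      then have "Arg (cis th) = th - 2 * pi" using False th1 by (simp add: Arg_cis)
      then show ?thesis unfolding oangle_def q using th1 by simp
    qed
    then show ?thesis unfolding th_def by simp
  qed
  show ?thesis using Birk Zf Xlin len curv ang by blast
qed

end
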